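(* The single-mode creation operator $\hat a^\dagger$ has approximate operator coherent rank $2$, and for any integer $n\ge0$ and coefficients $b_0,\dots,b_n\in\mathbb C$ the operator $\sum_{l=0}^n b_l(\hat a^\dagger)^l$ has approximate operator coherent rank at most $n+1$.
   Context: Single mode with Fock basis $\{|n\rangle\}$, creation operator $\hat a^\dagger=\sum_{n\ge0}\sqrt{n+1}|n+1\rangle\langle n|$. Coherent state $|\alpha\rangle=e^{-|\alpha|^2/2}\sum_n\frac{\alpha^n}{\sqrt{n!}}|n\rangle$. A state has coherent rank $k$ if it is a superposition of $k$ coherent states; its approximate coherent rank is the smallest $k$ such that for every $\delta>0$ there is a coherent rank $k$ state with fidelity greater than $1-\delta$ to it (after normalization). An operator $\hat A$ has approximate operator coherent rank $\ell$ iff $\hat A|\alpha\rangle$ has approximate coherent rank at most $\ell$ for every coherent state $|\alpha\rangle$ (and this bound is attained for at least one coherent state). *)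

theory Defs
  imports Complex_Main
begin

text \<open>Single-mode states are represented by their Fock-basis coefficients
  \<open>\<psi> :: nat \<Rightarrow> complex\<close>, i.e. \<open>\<psi> n = \<langle>n|\<psi>\<rangle>\<close>.\<close>

type_synonym state = "nat \<Rightarrow> complex"

definition coh :: "complex \<Rightarrow> state" where
  "coh \<alpha> n = complex_of_real (exp (- ((cmod \<alpha>) ^ 2) / 2)) * \<alpha> ^ n / complex_of_real (sqrt (fact n))"

definition adag :: "state \<Rightarrow> state" where
  "adag \<psi> n = (case n of 0 \<Rightarrow> 0 | Suc m \<Rightarrow> complex_of_real (sqrt (real (Suc m))) * \<psi> m)"

definition poly_adag :: "(nat \<Rightarrow> complex) \<Rightarrow> nat \<Rightarrow> state \<Rightarrow> state" where
  "poly_adag b N \<psi> n = (\<Sum>l\<le>N. b l * (adag ^^ l) \<psi> n)"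

definition inner_st :: "state \<Rightarrow> state \<Rightarrow> complex" where
  "inner_st \<phi> \<psi> = (\<Sum>n. cnj (\<phi> n) * \<psi> n)"

definition normsq_st :: "state \<Rightarrow> real" where
  "normsq_st \<psi> = (\<Sum>n. (cmod (\<psi> n))^2)"

definition fidelity :: "state \<Rightarrow> state \<Rightarrow> real" where
  "fidelity \<phi> \<psi> = (cmod (inner_st \<phi> \<psi>))^2 / (normsq_st \<phi> * normsq_st \<psi>)"

definition coh_rank_le :: "state \<Rightarrow> nat \<Rightarrow> bool" where
  "coh_rank_le \<phi> k \<longleftrightarrow> (\<exists>c \<alpha>. \<phi> = (\<lambda>n. \<Sum>j<k. c j * coh (\<alpha> j) n))"

text \<open>Approximate coherent rank at most \<open>k\<close>: for every \<open>\<delta> > 0\<close> there is a coherent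
  rank \<open>k\<close> state with fidelity greater than \<open>1 - \<delta>\<close>.  (Convention: the zero vector,
  the empty superposition, has rank 0.)\<close>
definition approx_coh_rank_le :: "state \<Rightarrow> nat \<Rightarrow> bool" where
  "approx_coh_rank_le \<psi> k \<longleftrightarrow>
     \<psi> = (\<lambda>_. 0) \<or> (\<forall>\<delta>>0. \<exists>\<phi>. coh_rank_le \<phi> k \<and> fidelity \<phi> \<psi> > 1 - \<delta>)"

definition approx_coh_rank :: "state \<Rightarrow> nat" where
  "approx_coh_rank \<psi> = (LEAST k. approx_coh_rank_le \<psi> k)"

definition op_approx_coh_rank_le :: "(state \<Rightarrow> state) \<Rightarrow> nat \<Rightarrow> bool" where
  "op_approx_coh_rank_le A l \<longleftrightarrow> (\<forall>\<alpha>. approx_coh_rank_le (A (coh \<alpha>)) l)"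

definition op_approx_coh_rank_eq :: "(state \<Rightarrow> state) \<Rightarrow> nat \<Rightarrow> bool" where
  "op_approx_coh_rank_eq A l \<longleftrightarrow>
     op_approx_coh_rank_le A l \<and> (\<exists>\<alpha>. approx_coh_rank (A (coh \<alpha>)) = l)"

end

theory Submission
  imports Defs "HOL-Analysis.Analysis"
begin


definition sfd :: "nat \<Rightarrow> nat \<Rightarrow> complex" where
  "sfd l k = (\<Sum>j\<le>l. (-1)^(l-j) * of_nat (l choose j) * of_nat j ^ k)"

lemma sfd_rec: "sfd (Suc l) k = (\<Sum>i<k. of_nat (k choose i) * sfd l i)"
proof -
  define A where "A = (\<Sum>j\<le>l. (-1)^(l-j) * of_nat (l choose j) * (of_nat j + 1:: complex) ^ k)"
  define B where "B = (\<Sum>j\<le>Suc l. (-1)^(Suc l-j) * of_nat (l choose j) * (of_nat j :: complex) ^ k)"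
  have "sfd (Suc l) k = B + A"
  proof -
    have "sfd (Suc l) k = (\<Sum>j\<le>Suc l. (-1)^(Suc l-j) * of_nat (Suc l choose j) * (of_nat j :: complex) ^ k)"
      by (simp add: sfd_def)
    also have "\<dots> = (-1)^(Suc l) * 0^k + (\<Sum>j\<le>l. (-1)^(l-j) * of_nat (Suc l choose Suc j) * (of_nat j + 1 :: complex) ^ k)"
      by (subst sum.atMost_Suc_shift) (simp add: add.commute)
    also have "\<dots> = (-1)^(Suc l) * 0^k + (\<Sum>j\<le>l. (-1)^(l-j) * of_nat (l choose Suc j) * (of_nat j + 1 :: complex) ^ k) + A"
      by (simp add: A_def algebra_simps sum.distrib)
    also have "(-1)^(Suc l) * 0^k + (\<Sum>j\<le>l. (-1)^(l-j) * of_nat (l choose Suc j) * (of_nat j + 1 :: complex) ^ k) = B"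
      unfolding B_def by (subst sum.atMost_Suc_shift) (simp add: add.commute)
    finally show ?thesis .
  qed
  moreover have "B = - sfd l k"
  proof -
    have "B = (\<Sum>j\<le>l. (-1)^(Suc l-j) * of_nat (l choose j) * (of_nat j :: complex) ^ k)"
      unfolding B_def by (simp)
    also have "\<dots> = - sfd l k" unfolding sfd_def
      by (auto simp add: sum_negf[symmetric] Suc_diff_le intro!: sum.cong)
    finally show ?thesis .
  qed
  moreover have "A = (\<Sum>i\<le>k. of_nat (k choose i) * sfd l i)"
  proof -
    have "A = (\<Sum>j\<le>l. (-1)^(l-j) * of_nat (l choose j) * (\<Sum>i\<le>k. of_nat (k choose i) * of_nat j ^ i))"
      unfolding A_def by (simp add: binomial_ring[of "of_nat _" 1] mult.commute)
    also have "\<dots> = (\<Sum>i\<le>k. of_nat (k choose i) * sfd l i)"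
      unfolding sfd_def by (simp add: sum_distrib_left sum_distrib_right algebra_simps sum.swap[of _ "{..k}"])
    finally show ?thesis .
  qed
  ultimately show ?thesis by (simp add: lessThan_Suc_atMost[symmetric] sum.lessThan_Suc)
qed

lemma sfd_zero: "k < l \<Longrightarrow> sfd l k = 0"
proof (induction l arbitrary: k)
  case 0 then show ?case by simp
next
  case (Suc l)
  show ?case unfolding sfd_rec using Suc by (intro sum.neutral) auto
qed

lemma sfd_same: "sfd l l = fact l"
proof (induction l)
  case 0 then show ?case by (simp add: sfd_def)
next
  case (Suc l)
  have "sfd (Suc l) (Suc l) = of_nat (Suc l choose l) * sfd l l"
    unfolding sfd_rec by (simp add: sum.lessThan_Suc sfd_zero)
  then show ?case using Suc by simp
qed

lemma sfd_bound: "l \<le> N \<Longrightarrow> cmod (sfd l k) \<le> 2^N * real N ^ k"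
proof -
  assume lN: "l \<le> N"
  have "cmod (sfd l k) \<le> (\<Sum>j\<le>l. real (l choose j) * real j ^ k)"
    unfolding sfd_def by (rule order_trans[OF norm_sum]) (simp add: norm_mult norm_power)
  also have "\<dots> \<le> (\<Sum>j\<le>l. real (l choose j) * real N ^ k)"
    using lN by (intro sum_mono mult_left_mono power_mono) auto
  also have "\<dots> = 2^l * real N ^ k"
  proof -
    have "(\<Sum>j\<le>l. real (l choose j)) = 2^l"
      using choose_row_sum[of l] by (metis of_nat_numeral of_nat_power of_nat_sum)
    then show ?thesis by (simp add: sum_distrib_right[symmetric])
  qed
  also have "\<dots> \<le> 2^N * real N ^ k"
    using lN by (intro mult_right_mono) auto
  finally show ?thesis .
qed


lemma diff_expand:
  fixes \<alpha> h :: complex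
  assumes "h \<noteq> 0"
  shows "(\<Sum>j\<le>l. (-1)^(l-j) * of_nat (l choose j) * (\<alpha> + of_nat j * h)^n) / h^l
       = (\<Sum>k\<in>{l..n}. of_nat (n choose k) * \<alpha>^(n-k) * h^(k-l) * sfd l k)"
proof -
  have "(\<Sum>j\<le>l. (-1)^(l-j) * of_nat (l choose j) * (\<alpha> + of_nat j * h)^n)
      = (\<Sum>j\<le>l. (-1)^(l-j) * of_nat (l choose j) * (\<Sum>k\<le>n. of_nat (n choose k) * (of_nat j * h)^k * \<alpha>^(n-k)))"
    by (intro sum.cong refl) (simp add: binomial_ring[of "of_nat _ * h" \<alpha>, symmetric] add.commute)
  also have "\<dots> = (\<Sum>k\<le>n. of_nat (n choose k) * \<alpha>^(n-k) * h^k * sfd l k)"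
    unfolding sfd_def
    by (simp add: sum_distrib_left sum_distrib_right power_mult_distrib algebra_simps sum.swap[of _ "{..n}"])
  also have "\<dots> = (\<Sum>k\<in>{l..n}. of_nat (n choose k) * \<alpha>^(n-k) * h^k * sfd l k)"
    by (rule sum.mono_neutral_right) (auto simp: sfd_zero)
  finally have "(\<Sum>j\<le>l. (-1)^(l-j) * of_nat (l choose j) * (\<alpha> + of_nat j * h)^n) / h^l
     = (\<Sum>k\<in>{l..n}. of_nat (n choose k) * \<alpha>^(n-k) * h^k * sfd l k) / h^l" by simp
  also have "\<dots> = (\<Sum>k\<in>{l..n}. of_nat (n choose k) * \<alpha>^(n-k) * h^(k-l) * sfd l k)"
    unfolding sum_divide_distrib using assms
    by (intro sum.cong refl) (simp add: power_diff)
  finally show ?thesis .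
qed

definition Pp :: "(nat \<Rightarrow> complex) \<Rightarrow> nat \<Rightarrow> complex \<Rightarrow> complex \<Rightarrow> nat \<Rightarrow> complex" where
  "Pp b N \<alpha> h n = (\<Sum>l\<le>N. b l * (\<Sum>k\<in>{l..n}. of_nat (n choose k) * \<alpha>^(n-k) * h^(k-l) * sfd l k))"

lemma Pp_0: "Pp b N \<alpha> 0 n = (\<Sum>l\<le>N. b l * (if l \<le> n then of_nat (n choose l) * \<alpha>^(n-l) * fact l else 0))"
proof -
  have "(\<Sum>k\<in>{l..n}. of_nat (n choose k) * \<alpha>^(n-k) * (0::complex)^(k-l) * sfd l k)
      = (if l \<le> n then of_nat (n choose l) * \<alpha>^(n-l) * fact l else 0)" for l
  proof (cases "l \<le> n")
    case True
    have "(\<Sum>k\<in>{l..n}. of_nat (n choose k) * \<alpha>^(n-k) * (0::complex)^(k-l) * sfd l k)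
        = (\<Sum>k\<in>{l}. of_nat (n choose k) * \<alpha>^(n-k) * (0::complex)^(k-l) * sfd l k)"
      using True by (intro sum.mono_neutral_right) auto
    then show ?thesis using True by (simp add: sfd_same)
  qed simp
  then show ?thesis unfolding Pp_def by simp
qed

lemma Pp_bound:
  assumes "cmod h \<le> 1"
  shows "cmod (Pp b N \<alpha> h n) \<le> (\<Sum>l\<le>N. cmod (b l)) * 2^N * (cmod \<alpha> + real N)^n"
proof -
  have inner: "cmod (\<Sum>k\<in>{l..n}. of_nat (n choose k) * \<alpha>^(n-k) * h^(k-l) * sfd l k) \<le> 2^N * (cmod \<alpha> + real N)^n"
    if "l \<le> N" for l
  proof -
    have "cmod (\<Sum>k\<in>{l..n}. of_nat (n choose k) * \<alpha>^(n-k) * h^(k-l) * sfd l k)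
        \<le> (\<Sum>k\<in>{l..n}. real (n choose k) * cmod \<alpha>^(n-k) * 1 * (2^N * real N ^ k))"
      apply (rule order_trans[OF norm_sum], rule sum_mono)
      apply (simp only: norm_mult norm_power norm_of_nat)
      apply (intro mult_mono sfd_bound that)
      using assms by (auto intro!: power_le_one)
    also have "\<dots> \<le> (\<Sum>k\<le>n. real (n choose k) * cmod \<alpha>^(n-k) * 1 * (2^N * real N ^ k))"
      by (intro sum_mono2) auto
    also have "\<dots> = 2^N * (cmod \<alpha> + real N)^n"
      by (simp add: binomial_ring[of "real N" "cmod \<alpha>"] add.commute sum_distrib_left algebra_simps)
    finally show ?thesis .
  qed
  have "cmod (Pp b N \<alpha> h n) \<le> (\<Sum>l\<le>N. cmod (b l) * (2^N * (cmod \<alpha> + real N)^n))"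
    unfolding Pp_def
    by (rule order_trans[OF norm_sum], rule sum_mono) (simp add: norm_mult inner mult_left_mono)
  also have "\<dots> = (\<Sum>l\<le>N. cmod (b l)) * 2^N * (cmod \<alpha> + real N)^n"
    by (simp add: sum_distrib_right mult.assoc mult.left_commute)
  finally show ?thesis .
qed




definition cc :: "complex \<Rightarrow> complex" where
  "cc \<alpha> = complex_of_real (exp (- ((cmod \<alpha>) ^ 2) / 2))"

lemma cc_nz: "cc \<alpha> \<noteq> 0" by (simp add: cc_def)

lemma coh_alt: "coh \<alpha> n = cc \<alpha> * \<alpha>^n / complex_of_real (sqrt (fact n))"
  by (simp add: coh_def cc_def)

lemma sqrt_fact_Suc: "sqrt (fact (Suc m)) = sqrt (real (Suc m)) * sqrt (fact m)"
  by (simp add: real_sqrt_mult del: of_nat_Suc)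

lemma adag_pow:
  "(adag^^l) (coh \<alpha>) n = (if l \<le> n then cc \<alpha> * complex_of_real (fact n / fact (n-l)) * \<alpha>^(n-l)
       / complex_of_real (sqrt (fact n)) else 0)"
proof (induction l arbitrary: n)
  case 0 then show ?case by (simp add: coh_alt)
next
  case (Suc l)
  show ?case
  proof (cases n)
    case 0 then show ?thesis by (simp add: adag_def)
  next
    case (Suc m)
    have "(adag^^Suc l) (coh \<alpha>) n = complex_of_real (sqrt (real (Suc m))) * (adag^^l) (coh \<alpha>) m"
      by (simp add: adag_def Suc)
    also have "\<dots> = (if Suc l \<le> n then cc \<alpha> * complex_of_real (fact n / fact (n-Suc l)) * \<alpha>^(n-Suc l)
       / complex_of_real (sqrt (fact n)) else 0)"
    proof (cases "l \<le> m")
      case True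
      have sp: "sqrt (real (Suc m)) > 0" "sqrt (fact m) > 0" by auto
      have key: "sqrt (real (Suc m)) * (fact m / fact (m - l)) / sqrt (fact m)
          = (fact (Suc m) / fact (m - l)) / sqrt (fact (Suc m))"
      proof -
        have s2: "sqrt (real (Suc m)) * sqrt (real (Suc m)) = real (Suc m)"
          using real_sqrt_mult_self[of "real (Suc m)"] by (simp del: of_nat_Suc)
        have "(fact (Suc m) / fact (m - l)) / sqrt (fact (Suc m))
            = (sqrt (real (Suc m)) * sqrt (real (Suc m)) * fact m / fact (m - l)) / (sqrt (real (Suc m)) * sqrt (fact m))"
          unfolding sqrt_fact_Suc s2 by (simp del: of_nat_Suc)
        also have "\<dots> = sqrt (real (Suc m)) * (fact m / fact (m - l)) / sqrt (fact m)"
          using sp by (simp add: divide_simps del: of_nat_Suc)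
        finally show ?thesis by simp
      qed
      have "complex_of_real (sqrt (real (Suc m))) * (adag^^l) (coh \<alpha>) m
          = cc \<alpha> * \<alpha>^(m-l) * complex_of_real (sqrt (real (Suc m)) * (fact m / fact (m - l)) / sqrt (fact m))"
        using True Suc.IH[of m] by simp
      also have "\<dots> = cc \<alpha> * \<alpha>^(m-l) * complex_of_real ((fact (Suc m) / fact (m - l)) / sqrt (fact (Suc m)))"
        by (simp only: key)
      finally show ?thesis using True Suc by simp
    next
      case False
      then show ?thesis using Suc.IH[of m] Suc by simp
    qed
    finally show ?thesis .
  qed
qed

lemma fact_ratio: "l \<le> n \<Longrightarrow> complex_of_real (fact n / fact (n-l)) = of_nat (n choose l) * fact l"
proof -
  assume "l \<le> n"
  then have "fact l * fact (n - l) * (n choose l) = fact n" by (rule binomial_fact_lemma)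
  then have "(fact n :: real) = fact l * fact (n-l) * real (n choose l)"
    by (metis of_nat_fact of_nat_mult)
  then have "fact n / fact (n-l) = (real (n choose l) * fact l :: real)"
    by (simp add: field_simps)
  then show ?thesis by simp
qed

lemma poly_adag_coh:
  "poly_adag b N (coh \<alpha>) n = cc \<alpha> * Pp b N \<alpha> 0 n / complex_of_real (sqrt (fact n))"
proof -
  have "b l * (adag ^^ l) (coh \<alpha>) n = cc \<alpha> * (b l * (if l \<le> n then of_nat (n choose l) * \<alpha>^(n-l) * fact l else 0))
      / complex_of_real (sqrt (fact n))" for l
  proof (cases "l \<le> n")
    case True
    have "(adag ^^ l) (coh \<alpha>) n = cc \<alpha> * (of_nat (n choose l) * fact l) * \<alpha>^(n-l) / complex_of_real (sqrt (fact n))"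
      unfolding adag_pow fact_ratio[OF True] using True by (simp only: if_True)
    then show ?thesis using True by (simp add: mult_ac)
  qed (simp add: adag_pow)
  then show ?thesis
    unfolding poly_adag_def Pp_0 by (simp add: sum_distrib_left sum_divide_distrib)
qed

lemma approx_repr:
  assumes "h \<noteq> 0"
  shows "cc \<alpha> * Pp b N \<alpha> h n / complex_of_real (sqrt (fact n))
    = (\<Sum>j<Suc N. (cc \<alpha> * (\<Sum>l\<le>N. b l * (-1)^(l-j) * of_nat (l choose j) / h^l) / cc (\<alpha> + of_nat j * h))
         * coh (\<alpha> + of_nat j * h) n)"
proof -
  have "Pp b N \<alpha> h n = (\<Sum>l\<le>N. b l * ((\<Sum>j\<le>l. (-1)^(l-j) * of_nat (l choose j) * (\<alpha> + of_nat j * h)^n) / h^l))"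
    unfolding Pp_def diff_expand[OF assms] ..
  also have "\<dots> = (\<Sum>l\<le>N. b l * ((\<Sum>j\<le>N. (-1)^(l-j) * of_nat (l choose j) * (\<alpha> + of_nat j * h)^n) / h^l))"
  proof (intro sum.cong refl)
    fix l assume "l \<in> {..N}"
    then have "(\<Sum>j\<le>l. (-1)^(l-j) * of_nat (l choose j) * (\<alpha> + of_nat j * h)^n)
        = (\<Sum>j\<le>N. (-1)^(l-j) * of_nat (l choose j) * (\<alpha> + of_nat j * h)^n)"
      by (intro sum.mono_neutral_left) auto
    then show "b l * ((\<Sum>j\<le>l. (-1)^(l-j) * of_nat (l choose j) * (\<alpha> + of_nat j * h)^n) / h^l)
      = b l * ((\<Sum>j\<le>N. (-1)^(l-j) * of_nat (l choose j) * (\<alpha> + of_nat j * h)^n) / h^l)" by simp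
  qed
  also have "\<dots> = (\<Sum>j\<le>N. (\<Sum>l\<le>N. b l * (-1)^(l-j) * of_nat (l choose j) / h^l) * (\<alpha> + of_nat j * h)^n)"
  proof -
    have "(\<Sum>l\<le>N. b l * ((\<Sum>j\<le>N. (-1)^(l-j) * of_nat (l choose j) * (\<alpha> + of_nat j * h)^n) / h^l))
        = (\<Sum>l\<le>N. \<Sum>j\<le>N. b l * (-1)^(l-j) * of_nat (l choose j) / h^l * (\<alpha> + of_nat j * h)^n)"
      by (simp only: sum_distrib_left sum_divide_distrib times_divide_eq_right mult.assoc)
         (intro sum.cong refl, simp only: times_divide_eq_left mult.assoc)
    also have "\<dots> = (\<Sum>j\<le>N. \<Sum>l\<le>N. b l * (-1)^(l-j) * of_nat (l choose j) / h^l * (\<alpha> + of_nat j * h)^n)"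
      by (rule sum.swap)
    also have "\<dots> = (\<Sum>j\<le>N. (\<Sum>l\<le>N. b l * (-1)^(l-j) * of_nat (l choose j) / h^l) * (\<alpha> + of_nat j * h)^n)"
      by (simp only: sum_distrib_right)
    finally show ?thesis .
  qed
  finally have P: "Pp b N \<alpha> h n = \<dots>" .
  show ?thesis
  proof -
    have t: "(cc \<alpha> * w / cc \<beta>) * (cc \<beta> * z / S) = cc \<alpha> * (w * z) / S" for w z S \<beta>
      using cc_nz[of \<beta>] by (simp add: divide_simps)
    show ?thesis
      unfolding P coh_alt lessThan_Suc_atMost t by (simp only: sum_distrib_left sum_divide_distrib)
  qed
qed



lemma Pp_cont: "((\<lambda>h::real. Pp b N \<alpha> (complex_of_real h) n) \<longlongrightarrow> Pp b N \<alpha> 0 n) (at_right 0)"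
proof -
  have "isCont (\<lambda>h::real. Pp b N \<alpha> (complex_of_real h) n) 0"
    unfolding Pp_def by (intro continuous_intros)
  then show ?thesis
    by (metis (no_types, lifting) filterlim_at_split isCont_def of_real_0)
qed

lemma M_summable:
  fixes K R :: real
  shows "summable (\<lambda>n. (K * R^n / sqrt (fact n)) * (K * R^n / sqrt (fact n)))"
proof -
  have "(K * R^n / sqrt (fact n)) * (K * R^n / sqrt (fact n)) = K^2 * (inverse (fact n) * (R^2)^n)" for n
  proof -
    have "sqrt (fact n) * sqrt (fact n) = (fact n :: real)"
      using real_sqrt_mult_self[of "fact n"] by simp
    then show ?thesis by (simp add: field_simps power2_eq_square power_mult_distrib power_mult[symmetric])
  qed
  then show ?thesis using summable_mult[OF summable_exp[of "R^2"], of "K^2"] by simp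
qed

theorem poly_rank:
  "op_approx_coh_rank_le (poly_adag b N) (N + 1)"
  unfolding op_approx_coh_rank_le_def
proof
  fix \<alpha> :: complex
  define \<psi> where "\<psi> = poly_adag b N (coh \<alpha>)"
  define G where "G = (\<lambda>(h::real) n. cc \<alpha> * Pp b N \<alpha> (complex_of_real h) n / complex_of_real (sqrt (fact n)))"
  define K where "K = cmod (cc \<alpha>) * (\<Sum>l\<le>N. cmod (b l)) * 2^N"
  define R where "R = cmod \<alpha> + real N"
  define M where "M = (\<lambda>n. K * R^n / sqrt (fact n))"
  have psi: "\<psi> n = G 0 n" for n unfolding \<psi>_def G_def poly_adag_coh by simp
  have bound: "cmod (G h n) \<le> M n" if "\<bar>h\<bar> \<le> 1" for h n
  proof -
    have "cmod (G h n) = cmod (cc \<alpha>) * cmod (Pp b N \<alpha> (complex_of_real h) n) / sqrt (fact n)"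
      unfolding G_def by (simp add: norm_mult norm_divide)
    also have "\<dots> \<le> cmod (cc \<alpha>) * ((\<Sum>l\<le>N. cmod (b l)) * 2^N * (cmod \<alpha> + real N)^n) / sqrt (fact n)"
      using that by (intro divide_right_mono mult_left_mono Pp_bound) auto
    finally show ?thesis unfolding M_def K_def R_def by (simp add: mult.assoc)
  qed
  have M0: "M n \<ge> 0" for n unfolding M_def K_def R_def by (auto intro!: divide_nonneg_pos mult_nonneg_nonneg sum_nonneg)
  have Msum: "summable (\<lambda>n. M n * M n)" unfolding M_def by (rule M_summable)
  have Glim: "((\<lambda>h. G h n) \<longlongrightarrow> G 0 n) (at_right 0)" for n
    unfolding G_def using Pp_cont[of b N \<alpha> n] by (auto intro!: tendsto_intros)
  have ev1: "eventually (\<lambda>h::real. 0 < h \<and> h < 1) (at_right 0)"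
    by (intro eventually_conj eventually_at_right_less) (simp add: eventually_at_right_field, auto intro: exI[of _ 1])
  have evb: "eventually (\<lambda>(k, h). P k h) (at_top \<times>\<^sub>F at_right (0::real))"
    if "\<And>k h. 0 < h \<Longrightarrow> h < 1 \<Longrightarrow> P k h" for P
    using eventually_prodI[OF always_eventually[of "\<lambda>_. True"] ev1, where F = at_top]
    by (rule eventually_mono) (auto intro: that)
  have T1: "((\<lambda>h. \<Sum>k. cnj (G h k) * G 0 k) \<longlongrightarrow> (\<Sum>k. cnj (G 0 k) * G 0 k)) (at_right 0)"
  proof -
    have "eventually (\<lambda>n. summable (\<lambda>k. norm (cnj (G n k) * G 0 k))) (at_right 0) \<and>
           summable (\<lambda>n. norm (cnj (G 0 n) * G 0 n)) \<and>
           ((\<lambda>n. suminf (\<lambda>k. cnj (G n k) * G 0 k)) \<longlongrightarrow> suminf (\<lambda>k. cnj (G 0 k) * G 0 k)) (at_right 0)"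
    proof (rule tannerys_theorem[where M = "\<lambda>k. M k * M k"])
      show "((\<lambda>n. cnj (G n k) * G 0 k) \<longlongrightarrow> cnj (G 0 k) * G 0 k) (at_right 0)" for k
        using Glim[of k] by (auto intro!: tendsto_intros)
      show "\<forall>\<^sub>F (k, n) in at_top \<times>\<^sub>F at_right 0. norm (cnj (G n k) * G 0 k) \<le> M k * M k"
        by (rule evb) (simp add: norm_mult, intro mult_mono bound M0, auto)
    qed (use Msum in auto)
    then show ?thesis by blast
  qed
  have T2: "((\<lambda>h. \<Sum>k. (cmod (G h k))^2) \<longlongrightarrow> (\<Sum>k. (cmod (G 0 k))^2)) (at_right 0)
      \<and> summable (\<lambda>k. (cmod (G 0 k))^2)"
  proof -
    have "eventually (\<lambda>n. summable (\<lambda>k. norm ((cmod (G n k))^2))) (at_right 0) \<and>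
           summable (\<lambda>n. norm ((cmod (G 0 n))^2)) \<and>
           ((\<lambda>n. suminf (\<lambda>k. (cmod (G n k))^2)) \<longlongrightarrow> suminf (\<lambda>k. (cmod (G 0 k))^2)) (at_right 0)"
    proof (rule tannerys_theorem[where M = "\<lambda>k. M k * M k"])
      show "((\<lambda>n. (cmod (G n k))^2) \<longlongrightarrow> (cmod (G 0 k))^2) (at_right 0)" for k
        using Glim[of k] by (auto intro!: tendsto_intros)
      show "\<forall>\<^sub>F (k, n) in at_top \<times>\<^sub>F at_right 0. norm ((cmod (G n k))^2) \<le> M k * M k"
        by (rule evb) (simp add: power2_eq_square, intro mult_mono bound M0, auto)
    qed (use Msum in auto)
    then show ?thesis by simp
  qed
  have psiG: "\<psi> = G 0" using psi by auto
  show "approx_coh_rank_le (poly_adag b N (coh \<alpha>)) (N + 1)"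
  proof (cases "\<psi> = (\<lambda>_. 0)")
    case True then show ?thesis unfolding approx_coh_rank_le_def \<psi>_def by simp
  next
    case False
    then obtain i where i: "G 0 i \<noteq> 0" using psiG by auto
    define T where "T = (\<Sum>k. (cmod (G 0 k))^2)"
    have Ts: "summable (\<lambda>k. (cmod (G 0 k))^2)" using T2 by blast
    have Tpos: "T > 0" unfolding T_def
      by (rule suminf_pos2[OF Ts, of i]) (use i in auto)
    have S: "(\<Sum>k. cnj (G 0 k) * G 0 k) = complex_of_real T"
    proof -
      have "cnj (G 0 k) * G 0 k = complex_of_real ((cmod (G 0 k))^2)" for k
        by (metis complex_norm_square mult.commute)
      moreover have "complex_of_real (\<Sum>k. (cmod (G 0 k))^2) = (\<Sum>k. complex_of_real ((cmod (G 0 k))^2))"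
        by (rule suminf_of_real[OF Ts])
      ultimately show ?thesis unfolding T_def by (simp del: of_real_power)
    qed
    have lim: "((\<lambda>h. fidelity (G h) \<psi>) \<longlongrightarrow> 1) (at_right 0)"
    proof -
      have "((\<lambda>h. (cmod (\<Sum>k. cnj (G h k) * G 0 k))^2 / ((\<Sum>k. (cmod (G h k))^2) * T))
          \<longlongrightarrow> (cmod (complex_of_real T))^2 / (T * T)) (at_right 0)"
      proof (rule tendsto_divide)
        have A: "((\<lambda>h. \<Sum>k. cnj (G h k) * G 0 k) \<longlongrightarrow> complex_of_real T) (at_right 0)"
          using T1 unfolding S .
        show "((\<lambda>h. (cmod (\<Sum>k. cnj (G h k) * G 0 k))^2) \<longlongrightarrow> (cmod (complex_of_real T))^2) (at_right 0)"
          by (intro tendsto_power tendsto_norm A)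
        show "((\<lambda>h. (\<Sum>k. (cmod (G h k))^2) * T) \<longlongrightarrow> T * T) (at_right 0)"
          using T2 unfolding T_def by (intro tendsto_mult tendsto_const) auto
        show "T * T \<noteq> 0" using Tpos by simp
      qed
      moreover have "(cmod (complex_of_real T))^2 / (T * T) = 1"
        using Tpos by (simp add: power2_eq_square)
      ultimately show ?thesis
        unfolding fidelity_def inner_st_def normsq_st_def psiG T_def by simp
    qed
    show ?thesis unfolding approx_coh_rank_le_def
    proof (intro disjI2 allI impI)
      fix \<delta> :: real assume "\<delta> > 0"
      then have "eventually (\<lambda>h. 1 - \<delta> < fidelity (G h) \<psi>) (at_right 0)"
        using order_tendstoD(1)[OF lim] by simp
      then have "eventually (\<lambda>h. 1 - \<delta> < fidelity (G h) \<psi> \<and> 0 < h \<and> h < 1) (at_right 0)"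
        using ev1 by (rule eventually_conj)
      then obtain h where h: "1 - \<delta> < fidelity (G h) \<psi>" "0 < h"
        using eventually_happens'[OF trivial_limit_at_right_real] by blast
      have "coh_rank_le (G h) (N + 1)"
      proof -
        define cf where "cf = (\<lambda>j. cc \<alpha> * (\<Sum>l\<le>N. b l * (-1)^(l-j) * of_nat (l choose j) / (complex_of_real h)^l)
              / cc (\<alpha> + of_nat j * complex_of_real h))"
        define bf where "bf = (\<lambda>j::nat. \<alpha> + of_nat j * complex_of_real h)"
        have "G h = (\<lambda>n. \<Sum>j<Suc N. cf j * coh (bf j) n)"
          unfolding G_def cf_def bf_def using h(2) by (intro ext approx_repr) simp
        moreover have "coh_rank_le (\<lambda>n. \<Sum>j<Suc N. cf j * coh (bf j) n) (Suc N)"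
          unfolding coh_rank_le_def by blast
        ultimately show ?thesis by simp
      qed
      then show "\<exists>\<phi>. coh_rank_le \<phi> (N + 1) \<and> 1 - \<delta> < fidelity \<phi> (poly_adag b N (coh \<alpha>))"
        using h unfolding \<psi>_def by blast
    qed
  qed
qed



lemma adag_poly: "adag = poly_adag (\<lambda>l. if l = 1 then 1 else 0) 1"
  by (intro ext) (simp add: poly_adag_def)

lemma coh0: "coh 0 = (\<lambda>n. if n = 0 then 1 else 0)"
  by (intro ext) (simp add: coh_def)

lemma psi1: "adag (coh 0) = (\<lambda>n. if n = 1 then 1 else 0)"
  by (intro ext) (simp add: adag_def coh0 split: nat.split)

lemma coh_sq: "(cmod (coh \<beta> n))^2 = exp (- ((cmod \<beta>)^2)) * (((cmod \<beta>)^2)^n /\<^sub>R fact n)"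
proof -
  define x where "x = (cmod \<beta>)^2"
  have e: "exp (- x / 2) ^ 2 = exp (- x)"
    by (simp add: power2_eq_square exp_add[symmetric])
  have e2: "(exp (- (y / 2)))^2 = exp (- y)" for y :: real
    by (simp add: power2_eq_square exp_add[symmetric])
  have s: "(sqrt (fact n))^2 = (fact n :: real)" by simp
  have "(cmod (coh \<beta> n))^2 = exp (- x / 2) ^ 2 * ((cmod \<beta>)^2)^n / (sqrt (fact n))^2"
    unfolding coh_def x_def
    by (simp add: norm_mult norm_divide norm_power power_mult_distrib power_divide power_mult[symmetric] mult.commute[of 2])
  then show ?thesis unfolding e s x_def by (simp add: field_simps e2)
qed

lemma coh_sq_sums: "(\<lambda>n. (cmod (coh \<beta> n))^2) sums 1"
proof -
  define x where "x = (cmod \<beta>)^2"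
  have "(\<lambda>n. exp (- x) * (x^n /\<^sub>R fact n)) sums (exp (- x) * exp x)"
    by (rule sums_mult[OF exp_converges])
  moreover have "exp (- x) * exp x = 1" by (simp add: exp_minus field_simps)
  ultimately show ?thesis unfolding coh_sq x_def by simp
qed

lemma normsq_coh: "normsq_st (coh \<beta>) = 1"
  unfolding normsq_st_def using coh_sq_sums sums_unique by metis

lemma two_x_le_exp: "2 * x \<le> exp (x::real)"
proof (cases "x \<le> 0")
  case True then show ?thesis by (smt (verit) exp_gt_zero)
next
  case False
  have "(1 + x/2)^2 \<le> exp (x/2) ^ 2"
    using False by (intro power_mono exp_ge_add_one_self) auto
  also have "\<dots> = exp x" by (simp add: power2_eq_square exp_add[symmetric])
  finally have "(1 + x/2)^2 \<le> exp x" .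
  moreover have "2 * x \<le> (1 + x/2)^2"
    using sum_power2_ge_zero[of "x/2 - 1" 0] by (simp add: power2_eq_square algebra_simps)
  ultimately show ?thesis by linarith
qed

lemma fid_low:
  assumes "coh_rank_le \<phi> k" "k \<le> 1"
  shows "fidelity \<phi> (adag (coh 0)) \<le> 1/2"
proof -
  define \<psi> :: state where "\<psi> = (\<lambda>n. if n = 1 then 1 else 0)"
  have sfin: "suminf f = f 1" if "\<And>n. n \<noteq> 1 \<Longrightarrow> f n = 0" for f :: "nat \<Rightarrow> 'a::{t2_space, comm_monoid_add, topological_space}"
    using suminf_finite[of "{1}" f] that by auto
  have inner: "inner_st \<phi> \<psi> = cnj (\<phi> 1)" unfolding inner_st_def \<psi>_def
    by (subst sfin) auto
  have npsi: "normsq_st \<psi> = 1" unfolding normsq_st_def \<psi>_def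
    by (subst sfin) auto
  from assms obtain c \<alpha> where phi: "\<phi> = (\<lambda>n. \<Sum>j<k. c j * coh (\<alpha> j) n)"
    unfolding coh_rank_le_def by blast
  show ?thesis
  proof (cases "k = 0")
    case True
    have "normsq_st (\<lambda>n. 0) = 0" "inner_st (\<lambda>n. 0) \<psi> = 0"
      by (simp_all add: normsq_st_def inner_st_def)
    then show ?thesis unfolding psi1 \<psi>_def[symmetric] fidelity_def phi using True by simp
  next
    case False
    with assms have k: "k = 1" by simp
    define c0 where "c0 = c 0"
    define \<beta> where "\<beta> = \<alpha> 0"
    have phi1: "\<phi> = (\<lambda>n. c0 * coh \<beta> n)" unfolding phi k c0_def \<beta>_def by simp
    have nphi: "normsq_st \<phi> = (cmod c0)^2"
    proof -
      have "normsq_st \<phi> = (\<Sum>n. (cmod c0)^2 * (cmod (coh \<beta> n))^2)"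
        unfolding normsq_st_def phi1 by (simp add: norm_mult power_mult_distrib)
      also have "\<dots> = (cmod c0)^2 * normsq_st (coh \<beta>)"
        unfolding normsq_st_def
      proof (rule suminf_mult)
        show "summable (\<lambda>n. (cmod (coh \<beta> n))^2)"
          using coh_sq_sums sums_summable by blast
      qed
      finally show ?thesis by (simp add: normsq_coh)
    qed
    show ?thesis
    proof (cases "c0 = 0")
      case True
      then show ?thesis unfolding fidelity_def nphi by simp
    next
      case False
      have "fidelity \<phi> (adag (coh 0)) = (cmod (coh \<beta> 1))^2"
        unfolding psi1 \<psi>_def[symmetric] fidelity_def inner nphi npsi using False
        by (simp add: phi1 norm_mult power_mult_distrib)
      also have "\<dots> = exp (- ((cmod \<beta>)^2)) * (cmod \<beta>)^2"
      proof -
        have e: "(exp (- (x / 2)))^2 = exp (- x)" for x :: real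
          by (simp add: power2_eq_square exp_add[symmetric])
        show ?thesis unfolding coh_def
          by (simp add: norm_mult norm_divide power_mult_distrib e)
      qed
      also have "\<dots> \<le> 1/2"
        using two_x_le_exp[of "(cmod \<beta>)^2"]
        by (simp add: exp_minus field_simps)
      finally show ?thesis .
    qed
  qed
qed

theorem corollary2:
  shows "op_approx_coh_rank_eq adag 2 \<and>
         (\<forall>(N::nat) (b::nat \<Rightarrow> complex). op_approx_coh_rank_le (poly_adag b N) (N + 1))"
proof -
  have P2: "\<forall>(N::nat) (b::nat \<Rightarrow> complex). op_approx_coh_rank_le (poly_adag b N) (N + 1)"
    using poly_rank by blast
  have le2: "op_approx_coh_rank_le adag 2"
    using poly_rank[of "\<lambda>l. if l = 1 then 1 else 0" 1] unfolding adag_poly[symmetric] by (simp add: numeral_2_eq_2)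
  have ne: "adag (coh 0) \<noteq> (\<lambda>_. 0)"
  proof
    assume "adag (coh 0) = (\<lambda>_. 0)"
    then have "adag (coh 0) 1 = 0" by simp
    then show False unfolding psi1 by simp
  qed
  have notle: "\<not> approx_coh_rank_le (adag (coh 0)) k" if "k \<le> 1" for k
  proof
    assume "approx_coh_rank_le (adag (coh 0)) k"
    then obtain \<phi> where "coh_rank_le \<phi> k" "1 - 1/2 < fidelity \<phi> (adag (coh 0))"
      unfolding approx_coh_rank_le_def using ne by (metis half_gt_zero zero_less_one)
    then show False using fid_low[of \<phi> k] that by simp
  qed
  have "approx_coh_rank (adag (coh 0)) = 2"
    unfolding approx_coh_rank_def
  proof (rule Least_equality)
    show "approx_coh_rank_le (adag (coh 0)) 2" using le2 unfolding op_approx_coh_rank_le_def by blast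
    show "2 \<le> k" if "approx_coh_rank_le (adag (coh 0)) k" for k
      using notle[of k] that by (cases "k \<le> 1") auto
  qed
  then show ?thesis unfolding op_approx_coh_rank_eq_def using le2 P2 by blast
qed

end
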